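(* Let $N\ge 5$ be odd and let $A$ be a compressible arrangement in the $N\times N$ square. Then $A$ is an acyclic polyomino if and only if its compression $C(A)$ is an acyclic polyomino each of whose holes has area one.
   Context: An arrangement in a rectangle is a choice of which unit squares (spaces) of the rectangle are filled with tiles; a polyomino is a finite union of closed unit tiles, meeting only in whole edges, with connected interior; its holes are the bounded components of the complement, the area of a hole is the number of unit squares filling it, and it is acyclic if its dual graph (tiles, adjacency along edges) is a tree. For the $N\times N$ square, its boundary layer is the outermost ring of spaces; $D_1$ denotes the boundary arrangement in which all ring spaces except the four corners are filled, $D_2$ the one with all ring spaces filled except exactly one corner. Index the interior $(N-2)\times(N-2)$ spaces by $(i,j)$, $1\le i,j\le N-2$, from the top-left; $W$ = spaces with $i+j$ even, $B$ = spaces with $i+j$ odd. For odd $N$, $P_N$ is the partial arrangement of the interior in which every space of $B$ is filled and every space $(i,j)$ with $i,j$ both odd is empty; the remaining spaces, $(i,j)$ with $i,j$ both even, form the $\frac{N-3}{2}\times\frac{N-3}{2}$ grid $U_N$. An arrangement $A$ in the $N\times N$ square is compressible if its boundary-layer part $D$ satisfies $D_1\subseteq D\subseteq D_2$ and its interior agrees with $P_N$; its compression $C(A)$ is the arrangement in the $\frac{N+1}{2}\times\frac{N+1}{2}$ square with the same boundary $D$ (placed at the corresponding positions) and whose interior space $(a,b)$ is filled iff space $(2a,2b)$ of $U_N$ is filled in $A$. *)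

theory Defs
  imports "HOL-Analysis.Analysis"
begin

text \<open>Spaces (unit squares) are indexed by pairs (i,j) of naturals; in the N x N square
  0 \<le> i,j < N, i = row (from the top), j = column (from the left).  The interior space
  with paper index (i,j), 1 \<le> i,j \<le> N-2, is exactly the space (i,j) here.
  An arrangement is a set of spaces (the filled ones).\<close>

type_synonym space = "nat \<times> nat"

definition square :: "nat \<Rightarrow> space set" where
  "square N = {(i,j). i < N \<and> j < N}"

definition is_arrangement :: "nat \<Rightarrow> space set \<Rightarrow> bool" where
  "is_arrangement N A \<longleftrightarrow> A \<subseteq> square N"

definition tile :: "space \<Rightarrow> (real \<times> real) set" where
  "tile c = cbox (real (fst c), real (snd c)) (real (fst c) + 1, real (snd c) + 1)"

definition open_cell :: "space \<Rightarrow> (real \<times> real) set" where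
  "open_cell c = box (real (fst c), real (snd c)) (real (fst c) + 1, real (snd c) + 1)"

definition region :: "space set \<Rightarrow> (real \<times> real) set" where
  "region A = \<Union> (tile ` A)"

text \<open>A polyomino: a (nonempty, finite) union of closed unit tiles with connected interior.
  Grid tiles automatically meet only along edges or corners and never overlap.\<close>

definition polyomino :: "space set \<Rightarrow> bool" where
  "polyomino A \<longleftrightarrow> finite A \<and> A \<noteq> {} \<and> connected (interior (region A))"

definition holes :: "space set \<Rightarrow> (real \<times> real) set set" where
  "holes A = {H \<in> components (- region A). bounded H}"

definition hole_area :: "(real \<times> real) set \<Rightarrow> nat" where
  "hole_area H = card {c :: space. open_cell c \<subseteq> H}"

definition adj :: "space \<Rightarrow> space \<Rightarrow> bool" where
  "adj c d \<longleftrightarrow>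
     (fst c = fst d \<and> (snd c = snd d + 1 \<or> snd d = snd c + 1)) \<or>
     (snd c = snd d \<and> (fst c = fst d + 1 \<or> fst d = fst c + 1))"

definition dual_edges :: "space set \<Rightarrow> space rel" where
  "dual_edges A = {(c,d). c \<in> A \<and> d \<in> A \<and> adj c d}"

definition dual_connected :: "space set \<Rightarrow> bool" where
  "dual_connected A \<longleftrightarrow> (\<forall>c\<in>A. \<forall>d\<in>A. (c,d) \<in> (dual_edges A)\<^sup>*)"

definition has_dual_cycle :: "space set \<Rightarrow> bool" where
  "has_dual_cycle A \<longleftrightarrow> (\<exists>xs. length xs \<ge> 3 \<and> distinct xs \<and> set xs \<subseteq> A \<and>
      (\<forall>k < length xs. adj (xs ! k) (xs ! ((k + 1) mod length xs))))"

definition acyclic_arr :: "space set \<Rightarrow> bool" where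
  "acyclic_arr A \<longleftrightarrow> dual_connected A \<and> \<not> has_dual_cycle A"

definition acyclic_polyomino :: "space set \<Rightarrow> bool" where
  "acyclic_polyomino A \<longleftrightarrow> polyomino A \<and> acyclic_arr A"

definition ring :: "nat \<Rightarrow> space set" where
  "ring N = {(i,j) \<in> square N. i = 0 \<or> j = 0 \<or> i = N - 1 \<or> j = N - 1}"

definition corners :: "nat \<Rightarrow> space set" where
  "corners N = {(0,0), (0, N - 1), (N - 1, 0), (N - 1, N - 1)}"

definition D1 :: "nat \<Rightarrow> space set" where
  "D1 N = ring N - corners N"

definition interior_sq :: "nat \<Rightarrow> space set" where
  "interior_sq N = {(i,j). 1 \<le> i \<and> i \<le> N - 2 \<and> 1 \<le> j \<and> j \<le> N - 2}"

text \<open>Compressible: boundary part D with D_1 \<subseteq> D \<subseteq> D_2 for some D_2 (all ring spaces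
  except exactly one corner), interior agreeing with P_N (all spaces of B filled, all
  spaces with both indices odd empty).\<close>

definition compressible :: "nat \<Rightarrow> space set \<Rightarrow> bool" where
  "compressible N A \<longleftrightarrow> is_arrangement N A \<and>
     D1 N \<subseteq> A \<and>
     (\<exists>c \<in> corners N. A \<inter> ring N \<subseteq> ring N - {c}) \<and>
     (\<forall>(i,j) \<in> interior_sq N. odd (i + j) \<longrightarrow> (i,j) \<in> A) \<and>
     (\<forall>(i,j) \<in> interior_sq N. odd i \<and> odd j \<longrightarrow> (i,j) \<notin> A)"

text \<open>Compression into the M x M square, M = (N+1)/2: same boundary (non-corner ring spaces
  filled, a corner filled iff the corresponding corner of the N-square is in A; corners
  correspond via (a,b) \<mapsto> (2a,2b), since 2(M-1) = N-1), interior space (a,b) filled iff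
  space (2a,2b) of U_N is filled in A.\<close>

definition compression :: "nat \<Rightarrow> space set \<Rightarrow> space set" where
  "compression N A =
     (let M = (N + 1) div 2 in
       {(a,b). (a,b) \<in> D1 M
             \<or> ((a,b) \<in> corners M \<and> (2 * a, 2 * b) \<in> A)
             \<or> ((a,b) \<in> interior_sq M \<and> (2 * a, 2 * b) \<in> A)})"

end

theory Submission
  imports Defs
begin

lemma mem_box2: "((x::real),(y::real)) \<in> box (a,b) (c,d) \<longleftrightarrow> a < x \<and> x < c \<and> b < y \<and> y < d"
  by (auto simp: mem_box Basis_prod_def)
lemma mem_cbox2: "((x::real),(y::real)) \<in> cbox (a,b) (c,d) \<longleftrightarrow> a \<le> x \<and> x \<le> c \<and> b \<le> y \<and> y \<le> d"
  by (auto simp: cbox_Pair_iff)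
lemma mem_tile: "(x,y) \<in> tile c \<longleftrightarrow> real (fst c) \<le> x \<and> x \<le> real (fst c) + 1 \<and> real (snd c) \<le> y \<and> y \<le> real (snd c) + 1"
  by (simp add: tile_def cbox_Pair_iff)
lemma mem_open_cell: "(x,y) \<in> open_cell c \<longleftrightarrow> real (fst c) < x \<and> x < real (fst c) + 1 \<and> real (snd c) < y \<and> y < real (snd c) + 1"
  by (simp add: open_cell_def mem_box2)

lemma closure_open_cell: "closure (open_cell c) = tile c"
  unfolding open_cell_def tile_def
  by (subst closure_box) (auto simp: box_eq_empty Basis_prod_def)

lemma open_cell_sub_tile: "open_cell c \<subseteq> tile c"
  using closure_subset closure_open_cell by blast

lemma open_cell_ne: "open_cell c \<noteq> {}"
proof -
  have "(real (fst c) + 1/2, real (snd c) + 1/2) \<in> open_cell c" by (simp add: mem_open_cell)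
  then show ?thesis by blast
qed

definition rect :: "space \<Rightarrow> space \<Rightarrow> (real \<times> real) set" where
  "rect c d = box (real (min (fst c) (fst d)), real (min (snd c) (snd d)))
                  (real (max (fst c) (fst d)) + 1, real (max (snd c) (snd d)) + 1)"

lemma rect_sub: "adj c d \<Longrightarrow> rect c d \<subseteq> tile c \<union> tile d"
proof
  fix p assume a: "adj c d" and p: "p \<in> rect c d"
  obtain x y where pxy: "p = (x,y)" by (cases p)
  obtain c1 c2 d1 d2 where cd: "c = (c1,c2)" "d = (d1,d2)" by (cases c, cases d)
  show "p \<in> tile c \<union> tile d"
    using a p unfolding pxy cd rect_def adj_def
    by (auto simp: of_nat_max of_nat_min mem_box2 mem_tile)
qed

lemma rect_sup: "adj c d \<Longrightarrow> open_cell c \<union> open_cell d \<subseteq> rect c d"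
proof
  fix p assume a: "adj c d" and p: "p \<in> open_cell c \<union> open_cell d"
  obtain x y where pxy: "p = (x,y)" by (cases p)
  obtain c1 c2 d1 d2 where cd: "c = (c1,c2)" "d = (d1,d2)" by (cases c, cases d)
  show "p \<in> rect c d"
    using a p unfolding pxy cd rect_def adj_def
    by (auto simp: of_nat_max of_nat_min mem_box2 mem_open_cell)
qed

lemma connected_rect: "connected (rect c d)"
  unfolding rect_def by (simp add: convex_connected)
lemma connected_open_cell: "connected (open_cell c)"
  unfolding open_cell_def by (simp add: convex_connected)

lemma comp_absorb:
  assumes "connected T" "T \<subseteq> S" "T \<inter> connected_component_set S p \<noteq> {}"
  shows "T \<subseteq> connected_component_set S p"
proof -
  obtain z where z: "z \<in> T" "z \<in> connected_component_set S p" using assms(3) by blast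
  have "T \<subseteq> connected_component_set S z" using connected_component_maximal[OF z(1) assms(1,2)] .
  moreover have "connected_component_set S z = connected_component_set S p"
    using z(2) by (metis connected_component_eq)
  ultimately show ?thesis by simp
qed

lemma dual_conn_poly:
  assumes fin: "finite X" and ne: "X \<noteq> {}" and dc: "dual_connected X"
  shows "polyomino X"
proof -
  define S where "S = (\<Union>c\<in>X. open_cell c) \<union> (\<Union>(c,d)\<in>dual_edges X. rect c d)"
  obtain c0 where c0: "c0 \<in> X" using ne by blast
  obtain p0 where p0: "p0 \<in> open_cell c0" using open_cell_ne by blast
  define K where "K = connected_component_set S p0"
  have oc: "open_cell c \<subseteq> K" if "(c0, c) \<in> (dual_edges X)\<^sup>*" for c
    using that
  proof (induction rule: rtrancl_induct)
    case base
    show ?case unfolding K_def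
      by (rule connected_component_maximal[OF p0 connected_open_cell]) (use c0 S_def in blast)
  next
    case (step c d)
    have e: "c \<in> X" "d \<in> X" "adj c d" using step(2) by (auto simp: dual_edges_def)
    have "rect c d \<subseteq> S" using step(2) unfolding S_def by blast
    moreover have "rect c d \<inter> K \<noteq> {}"
      using rect_sup[OF e(3)] step(3) open_cell_ne[of c] by blast
    ultimately have "rect c d \<subseteq> K" unfolding K_def using comp_absorb connected_rect by blast
    then show ?case using rect_sup[OF e(3)] by blast
  qed
  have "S \<subseteq> K"
  proof
    fix p assume "p \<in> S"
    then consider c where "c \<in> X" "p \<in> open_cell c" | c d where "(c,d) \<in> dual_edges X" "p \<in> rect c d"
      unfolding S_def by blast
    then show "p \<in> K"
    proof cases
      case 1 then show ?thesis using oc dc c0 unfolding dual_connected_def by blast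
    next
      case 2
      have e: "c \<in> X" "d \<in> X" "adj c d" using 2(1) by (auto simp: dual_edges_def)
      have "rect c d \<subseteq> S" using 2(1) unfolding S_def by blast
      moreover have "rect c d \<inter> K \<noteq> {}"
        using rect_sup[OF e(3)] oc[of c] dc c0 e(1) open_cell_ne[of c] unfolding dual_connected_def by blast
      ultimately have "rect c d \<subseteq> K" unfolding K_def using comp_absorb connected_rect by blast
      then show ?thesis using 2(2) by blast
    qed
  qed
  moreover have "K \<subseteq> S" unfolding K_def by (rule connected_component_subset)
  ultimately have cS: "connected S" unfolding K_def by (metis connected_connected_component subset_antisym)
  have "S \<subseteq> interior (region X)"
  proof -
    have "open S" unfolding S_def rect_def open_cell_def by (intro open_Un open_UN) auto
    moreover have "S \<subseteq> region X"
    proof -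
      have "open_cell c \<subseteq> region X" if "c \<in> X" for c using that open_cell_sub_tile unfolding region_def by blast
      moreover have "rect c d \<subseteq> region X" if "(c,d) \<in> dual_edges X" for c d
        using that rect_sub[of c d] unfolding region_def dual_edges_def by blast
      ultimately show ?thesis unfolding S_def by blast
    qed
    ultimately show ?thesis by (simp add: interior_maximal)
  qed
  moreover have "interior (region X) \<subseteq> closure S"
  proof -
    have "tile c \<subseteq> closure S" if "c \<in> X" for c
    proof -
      have "open_cell c \<subseteq> S" using that unfolding S_def by blast
      then show ?thesis using closure_mono closure_open_cell by metis
    qed
    then have "region X \<subseteq> closure S" unfolding region_def by blast
    then show ?thesis using interior_subset by blast
  qed
  ultimately have "connected (interior (region X))" using connected_intermediate_closure[OF cS] by blast
  then show ?thesis using fin ne unfolding polyomino_def by blast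
qed

lemma lt1: "real m < real n + 1 \<longleftrightarrow> m \<le> n"
proof -
  have "real n + 1 = real (Suc n)" by simp
  then show ?thesis by (simp only: of_nat_less_iff) linarith
qed

definition indep :: "nat \<Rightarrow> space set \<Rightarrow> bool" where
  "indep M C \<longleftrightarrow> (\<forall>u v. u \<in> square M \<longrightarrow> v \<in> square M \<longrightarrow> adj u v \<longrightarrow> u \<in> C \<or> v \<in> C)"

lemma tile_meets_rect:
  assumes "adj u v" "tile c \<inter> rect u v \<noteq> {}"
  shows "c = u \<or> c = v"
proof -
  obtain x y where xy: "(x,y) \<in> tile c" "(x,y) \<in> rect u v" using assms(2) by auto
  have h: "real (min (fst u) (fst v)) < real (fst c) + 1" "real (fst c) < real (max (fst u) (fst v)) + 1"
       "real (min (snd u) (snd v)) < real (snd c) + 1" "real (snd c) < real (max (snd u) (snd v)) + 1"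
    using xy unfolding mem_tile rect_def mem_box2 by linarith+
  then have "min (fst u) (fst v) \<le> fst c" "fst c \<le> max (fst u) (fst v)"
     "min (snd u) (snd v) \<le> snd c" "snd c \<le> max (snd u) (snd v)"
    by (simp_all only: lt1)
  then show ?thesis using assms(1) unfolding adj_def prod_eq_iff
    by (simp add: min_def max_def split: if_splits; arith)
qed

lemma open_cell_meets_tile:
  assumes "open_cell c \<inter> tile e \<noteq> {}" shows "e = c"
proof -
  obtain x y where xy: "(x,y) \<in> open_cell c" "(x,y) \<in> tile e" using assms by auto
  have "real (fst c) < real (fst e) + 1" "real (fst e) < real (fst c) + 1"
       "real (snd c) < real (snd e) + 1" "real (snd e) < real (snd c) + 1"
    using xy unfolding mem_tile mem_open_cell by linarith+
  then have "fst c \<le> fst e" "fst e \<le> fst c" "snd c \<le> snd e" "snd e \<le> snd c" by (simp_all only: lt1)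
  then show ?thesis by (simp add: prod_eq_iff)
qed

lemma open_cell_sub_iff: "open_cell d \<subseteq> open_cell c \<Longrightarrow> d = c"
  using open_cell_meets_tile[of c d] open_cell_ne[of d] open_cell_sub_tile[of d] by blast

lemma floor_cell:
  fixes y :: real
  assumes "real a \<le> y" "y \<le> real b" "a < b"
  shows "\<exists>j. a \<le> j \<and> j < b \<and> real j \<le> y \<and> y \<le> real j + 1"
proof (cases "y < real b")
  case True
  define j where "j = nat \<lfloor>y\<rfloor>"
  have y0: "y \<ge> 0" using assms by simp
  have "real j \<le> y" unfolding j_def using y0 by linarith
  moreover have "y \<le> real j + 1" unfolding j_def using y0 by linarith
  moreover have "a \<le> j" unfolding j_def using assms(1) y0
    by (metis le_nat_floor)
  moreover have "j < b"
  proof -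
    have "\<lfloor>y\<rfloor> < int b" using True by (simp add: floor_less_iff)
    then show ?thesis unfolding j_def using y0 by (simp add: nat_less_iff)
  qed
  ultimately show ?thesis by blast
next
  case False
  then have "y = real b" using assms by simp
  then show ?thesis using assms(3) by (intro exI[of _ "b - 1"]) auto
qed

lemma region_sub_cbox:
  assumes "C \<subseteq> square M" shows "region C \<subseteq> cbox (0,0) (real M, real M)"
proof
  fix p assume "p \<in> region C"
  then obtain c where c: "c \<in> C" "p \<in> tile c" unfolding region_def by blast
  obtain x y where p: "p = (x,y)" by (cases p)
  have "fst c < M" "snd c < M" using c(1) assms unfolding square_def by auto
  then have "real (fst c) + 1 \<le> real M" "real (snd c) + 1 \<le> real M"
    by linarith+
  then show "p \<in> cbox (0,0) (real M, real M)" using c(2) unfolding p mem_cbox2 mem_tile by auto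
qed

lemma cbox_cell:
  assumes "(x,y) \<in> cbox (0,0) (real M, real M)" "0 < M"
  shows "\<exists>c \<in> square M. (x,y) \<in> tile c"
proof -
  obtain i where i: "i < M" "real i \<le> x" "x \<le> real i + 1"
    using floor_cell[of 0 x M] assms unfolding mem_cbox2 by auto
  obtain j where j: "j < M" "real j \<le> y" "y \<le> real j + 1"
    using floor_cell[of 0 y M] assms unfolding mem_cbox2 by auto
  show ?thesis using i j by (intro bexI[of _ "(i,j)"]) (auto simp: mem_tile square_def)
qed

lemma corner_nbr:
  assumes "u \<in> corners M" "adj u v" "v \<in> square M" "M \<ge> 3"
  shows "v \<in> D1 M"
  using assms unfolding corners_def adj_def D1_def ring_def square_def
  by (cases u; cases v) auto

lemma square_split:
  assumes "u \<in> square M" "u \<notin> ring M" shows "u \<in> interior_sq M"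
  using assms unfolding square_def ring_def interior_sq_def by (cases u) auto

lemma interior_not_ring: "u \<in> interior_sq M \<Longrightarrow> u \<notin> ring M"
  unfolding ring_def interior_sq_def square_def by (cases u) auto

lemma absent_cases:
  assumes "u \<in> square M" "u \<notin> C" "D1 M \<subseteq> C"
  shows "u \<in> corners M \<or> u \<in> interior_sq M"
  using assms square_split unfolding D1_def by blast

lemma ring_bdry:
  assumes M3: "M \<ge> 3" and D: "D1 M \<subseteq> C"
    and z: "(x,y) \<in> cbox (1,1) (real M - 1, real M - 1)" "(x,y) \<notin> box (1,1) (real M - 1, real M - 1)"
  shows "(x,y) \<in> region C"
proof -
  have xy: "1 \<le> x" "x \<le> real M - 1" "1 \<le> y" "y \<le> real M - 1" using z(1) unfolding mem_cbox2 by auto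
  have edge: "x = 1 \<or> x = real M - 1 \<or> y = 1 \<or> y = real M - 1" using z(2) xy unfolding mem_box2 by auto
  have rM: "real (M - 1) = real M - 1" using M3 by simp
  have "\<exists>j. 1 \<le> j \<and> j < M - 1 \<and> real j \<le> y \<and> y \<le> real j + 1"
    by (rule floor_cell) (use xy rM M3 in auto)
  then obtain j where j: "1 \<le> j" "j < M - 1" "real j \<le> y" "y \<le> real j + 1" by blast
  have "\<exists>i. 1 \<le> i \<and> i < M - 1 \<and> real i \<le> x \<and> x \<le> real i + 1"
    by (rule floor_cell) (use xy rM M3 in auto)
  then obtain i where i: "1 \<le> i" "i < M - 1" "real i \<le> x" "x \<le> real i + 1" by blast
  have inD: "(0,j) \<in> D1 M" "(M-1,j) \<in> D1 M" "(i,0) \<in> D1 M" "(i,M-1) \<in> D1 M"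
    using i(1,2) j(1,2) M3 unfolding D1_def ring_def corners_def square_def by auto
  from edge show ?thesis
  proof (elim disjE)
    assume "x = 1"
    then have "(x,y) \<in> tile (0,j)" using j by (simp add: mem_tile)
    then show ?thesis using inD D unfolding region_def by blast
  next
    assume "x = real M - 1"
    then have "(x,y) \<in> tile (M-1,j)" using j rM by (simp add: mem_tile)
    then show ?thesis using inD D unfolding region_def by blast
  next
    assume "y = 1"
    then have "(x,y) \<in> tile (i,0)" using i by (simp add: mem_tile)
    then show ?thesis using inD D unfolding region_def by blast
  next
    assume "y = real M - 1"
    then have "(x,y) \<in> tile (i,M-1)" using i rM by (simp add: mem_tile)
    then show ?thesis using inD D unfolding region_def by blast
  qed
qed

lemma holes_bad:
  assumes M3: "M \<ge> 3" and Csq: "C \<subseteq> square M" and D: "D1 M \<subseteq> C"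
    and h: "\<forall>H \<in> holes C. hole_area H = 1"
  shows "indep M C"
  unfolding indep_def
proof (intro allI impI, rule ccontr)
  fix u v assume u: "u \<in> square M" and v: "v \<in> square M" and a: "adj u v" and n: "\<not> (u \<in> C \<or> v \<in> C)"
  have a': "adj v u" using a unfolding adj_def by auto
  have ui: "u \<in> interior_sq M" using absent_cases[OF u _ D] n corner_nbr[OF _ a v M3] D by blast
  have vi: "v \<in> interior_sq M" using absent_cases[OF v _ D] n corner_nbr[OF _ a' u M3] D by blast
  define R where "R = region C"
  have rR: "rect u v \<subseteq> - R"
  proof
    fix z assume z: "z \<in> rect u v"
    show "z \<in> - R"
    proof
      assume "z \<in> R"
      then obtain c where c: "c \<in> C" "z \<in> tile c" unfolding R_def region_def by blast
      then have "c = u \<or> c = v" using tile_meets_rect[OF a, of c] z by blast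
      then show False using c n by blast
    qed
  qed
  define p where "p = (real (fst u) + 1/2, real (snd u) + 1/2)"
  have pu: "p \<in> open_cell u" unfolding p_def by (simp add: mem_open_cell)
  then have pr: "p \<in> rect u v" using rect_sup[OF a] by blast
  define H where "H = connected_component_set (- R) p"
  have Hc: "H \<in> components (- R)" unfolding H_def components_iff using pr rR by blast
  have rH: "rect u v \<subseteq> H" unfolding H_def by (rule connected_component_maximal[OF pr connected_rect rR])
  define B where "B = box (1::real,1::real) (real M - 1, real M - 1)"
  define Bc where "Bc = cbox (1::real,1::real) (real M - 1, real M - 1)"
  have BB: "B \<subseteq> Bc" unfolding B_def Bc_def by (rule box_subset_cbox)
  have bd: "Bc - B \<subseteq> R"
  proof
    fix z assume "z \<in> Bc - B"
    then show "z \<in> R" unfolding R_def B_def Bc_def using ring_bdry[OF M3 D] by (cases z) blast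
  qed
  have HR: "H \<subseteq> - R" unfolding H_def by (rule connected_component_subset)
  have "H \<subseteq> B \<union> - Bc" using HR bd by blast
  moreover have "B \<inter> - Bc \<inter> H = {}" using BB by blast
  moreover have "open B" "open (- Bc)" unfolding B_def Bc_def by auto
  moreover have "connected H" unfolding H_def by simp
  ultimately have "B \<inter> H = {} \<or> - Bc \<inter> H = {}" using connectedD by metis
  moreover have "p \<in> B"
  proof -
    have "1 \<le> fst u" "fst u + 2 \<le> M" "1 \<le> snd u" "snd u + 2 \<le> M"
      using ui unfolding interior_sq_def by auto
    then have "1 \<le> real (fst u)" "real (fst u) + 2 \<le> real M" "1 \<le> real (snd u)" "real (snd u) + 2 \<le> real M"
      by linarith+
    then show ?thesis unfolding B_def p_def mem_box2 by linarith
  qed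
  moreover have "p \<in> H" using rH pr by blast
  ultimately have "H \<subseteq> Bc" by blast
  then have bH: "bounded H" unfolding Bc_def using bounded_cbox bounded_subset by blast
  have hH: "H \<in> holes C" unfolding holes_def R_def using Hc bH R_def by simp
  have "u \<in> {c. open_cell c \<subseteq> H}" "v \<in> {c. open_cell c \<subseteq> H}" using rH rect_sup[OF a] by auto
  moreover have "u \<noteq> v" using a unfolding adj_def by auto
  moreover have "card {c. open_cell c \<subseteq> H} = 1" using h hH unfolding hole_area_def by blast
  ultimately show False by (metis card_1_singletonE singletonD)
qed

lemma tile_bdry:
  assumes ci: "(a,b) \<in> interior_sq M"
    and nb: "(a-1,b) \<in> C" "(a+1,b) \<in> C" "(a,b-1) \<in> C" "(a,b+1) \<in> C"
    and z: "(x,y) \<in> tile (a,b)" "(x,y) \<notin> open_cell (a,b)"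
  shows "(x,y) \<in> region C"
proof -
  have a1: "1 \<le> a" "1 \<le> b" using ci unfolding interior_sq_def by auto
  have ra: "real (a-1) = real a - 1" "real (b-1) = real b - 1" using a1 by auto
  have t: "real a \<le> x" "x \<le> real a + 1" "real b \<le> y" "y \<le> real b + 1" using z(1) by (auto simp: mem_tile)
  have "x = real a \<or> x = real a + 1 \<or> y = real b \<or> y = real b + 1" using z(2) t by (auto simp: mem_open_cell)
  then have "(x,y) \<in> tile (a-1,b) \<or> (x,y) \<in> tile (a+1,b) \<or> (x,y) \<in> tile (a,b-1) \<or> (x,y) \<in> tile (a,b+1)"
    using t ra by (auto simp: mem_tile)
  then show ?thesis using nb unfolding region_def by blast
qed

lemma corner_ray:
  assumes M3: "M \<ge> 3" and Csq: "C \<subseteq> square M" and c: "c \<in> corners M" "c \<notin> C"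
    and p: "p \<in> tile c" "p \<notin> region C" and t: "0 \<le> t" "t \<le> 2"
  shows "p + t *\<^sub>R (if fst c = 0 then -1 else 1, if snd c = 0 then -1 else 1) \<notin> region C"
proof
  assume "p + t *\<^sub>R (if fst c = 0 then -1 else 1, if snd c = 0 then -1 else 1) \<in> region C"
  then obtain e where e: "e \<in> C" "p + t *\<^sub>R (if fst c = 0 then -1 else 1, if snd c = 0 then -1 else 1) \<in> tile e"
    unfolding region_def by blast
  obtain x y where pxy: "p = (x,y)" by (cases p)
  have eM: "fst e < M" "snd e < M" using e(1) Csq unfolding square_def by auto
  have reM: "real (fst e) + 1 \<le> real M" "real (snd e) + 1 \<le> real M" using eM by linarith+
  have rM: "real (M - 1) = real M - 1" using M3 by simp
  have cc: "(fst c = 0 \<or> fst c = M - 1) \<and> (snd c = 0 \<or> snd c = M - 1)" using c(1) unfolding corners_def by auto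
  have pt: "real (fst c) \<le> x" "x \<le> real (fst c) + 1" "real (snd c) \<le> y" "y \<le> real (snd c) + 1"
    using p(1) unfolding pxy by (auto simp: mem_tile)
  have et: "real (fst e) \<le> x + t * (if fst c = 0 then -1 else 1)" "x + t * (if fst c = 0 then -1 else 1) \<le> real (fst e) + 1"
           "real (snd e) \<le> y + t * (if snd c = 0 then -1 else 1)" "y + t * (if snd c = 0 then -1 else 1) \<le> real (snd e) + 1"
    using e(2) unfolding pxy by (auto simp: mem_tile)
  show False
  proof (cases "t = 0")
    case True
    then show False using e p unfolding pxy region_def by auto
  next
    case False
    then have tp: "t > 0" using t by simp
    have f1: "fst e = fst c"
    proof (cases "fst c = 0")
      case True
      then have "real (fst e) < 1" using et(1) pt(2) tp by simp
      then show ?thesis using True by simp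
    next
      case False
      then have fc: "fst c = M - 1" using cc by auto
      then have "real (fst e) + 1 > real M - 1" using et(2) pt(1) tp False rM by simp
      then have "fst e + 1 > M - 1" using M3 by linarith
      then show ?thesis using fc eM by linarith
    qed
    have f2: "snd e = snd c"
    proof (cases "snd c = 0")
      case True
      then have "real (snd e) < 1" using et(3) pt(4) tp by simp
      then show ?thesis using True by simp
    next
      case False
      then have fc: "snd c = M - 1" using cc by auto
      then have "real (snd e) + 1 > real M - 1" using et(4) pt(3) tp False rM by simp
      then have "snd e + 1 > M - 1" using M3 by linarith
      then show ?thesis using fc eM by linarith
    qed
    have "e = c" using f1 f2 by (simp add: prod_eq_iff)
    then show False using e c by simp
  qed
qed

lemma holes_ok:
  assumes M3: "M \<ge> 3" and Csq: "C \<subseteq> square M" and D: "D1 M \<subseteq> C"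
    and ind: "indep M C" and hH: "H \<in> holes C"
  shows "hole_area H = 1"
proof -
  define R where "R = region C"
  obtain p where p: "p \<in> - R" "H = connected_component_set (- R) p" and bH: "bounded H"
    using hH unfolding holes_def components_iff R_def by blast
  have HR: "H \<subseteq> - R" using p(2) connected_component_subset by blast
  have pH: "p \<in> H" using p by simp
  define Q where "Q = cbox (0::real,0::real) (real M, real M)"
  have RQ: "R \<subseteq> Q" unfolding R_def Q_def by (rule region_sub_cbox[OF Csq])
  have ext: "q \<in> Q" if q: "q \<in> H" for q
  proof (rule ccontr)
    assume nq: "q \<notin> Q"
    have Hq: "H = connected_component_set (- R) q" using p q by (metis connected_component_eq)
    have "connected (- Q)" unfolding Q_def
      by (rule connected_complement_bounded_convex) (auto simp: DIM_prod)
    then have "- Q \<subseteq> H" unfolding Hq using RQ nq by (intro connected_component_maximal) auto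
    moreover have "\<not> bounded (- Q)"
    proof
      assume "bounded (- Q)"
      then have "bounded (Q \<union> - Q)" unfolding Q_def using bounded_cbox bounded_Un by blast
      moreover have "Q \<union> - Q = UNIV" by blast
      ultimately show False by simp
    qed
    ultimately show False using bH bounded_subset by blast
  qed
  obtain c where c: "c \<in> square M" "p \<in> tile c"
    using cbox_cell[of "fst p" "snd p" M] ext[OF pH] M3 unfolding Q_def by auto
  have cC: "c \<notin> C" using c p(1) unfolding R_def region_def by blast
  show ?thesis
  proof (cases "c \<in> interior_sq M")
    case True
    obtain a b where ab: "c = (a,b)" by (cases c)
    have i: "1 \<le> a" "a + 2 \<le> M" "1 \<le> b" "b + 2 \<le> M" using True unfolding ab interior_sq_def by auto
    have nb: "(a-1,b) \<in> C" "(a+1,b) \<in> C" "(a,b-1) \<in> C" "(a,b+1) \<in> C"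
    proof -
      have nbr: "\<And>v. v \<in> square M \<Longrightarrow> adj c v \<Longrightarrow> v \<in> C" using ind cC c(1) unfolding indep_def by blast
      show "(a-1,b) \<in> C" by (rule nbr) (use i in \<open>auto simp: square_def adj_def ab\<close>)
      show "(a+1,b) \<in> C" by (rule nbr) (use i in \<open>auto simp: square_def adj_def ab\<close>)
      show "(a,b-1) \<in> C" by (rule nbr) (use i in \<open>auto simp: square_def adj_def ab\<close>)
      show "(a,b+1) \<in> C" by (rule nbr) (use i in \<open>auto simp: square_def adj_def ab\<close>)
    qed
    have bd: "tile c - open_cell c \<subseteq> R"
    proof
      fix z assume "z \<in> tile c - open_cell c"
      then show "z \<in> R" unfolding R_def ab using tile_bdry[OF True[unfolded ab] nb] by (cases z) blast
    qed
    have oR: "open_cell c \<subseteq> - R"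
    proof
      fix z assume z: "z \<in> open_cell c"
      show "z \<in> - R"
      proof
        assume "z \<in> R"
        then obtain e where "e \<in> C" "z \<in> tile e" unfolding R_def region_def by blast
        then show False using open_cell_meets_tile[of c e] z cC by blast
      qed
    qed
    have pc: "p \<in> open_cell c" using bd c(2) p(1) by blast
    have "open_cell c \<subseteq> H" unfolding p(2) by (rule connected_component_maximal[OF pc connected_open_cell oR])
    moreover have "H \<subseteq> open_cell c"
    proof -
      have "H \<subseteq> open_cell c \<union> - tile c" using HR bd by blast
      moreover have "open_cell c \<inter> - tile c \<inter> H = {}" using open_cell_sub_tile by blast
      moreover have "open (open_cell c)" "open (- tile c)" unfolding open_cell_def tile_def by auto
      moreover have "connected H" unfolding p(2) by simp
      ultimately have "open_cell c \<inter> H = {} \<or> - tile c \<inter> H = {}" using connectedD by metis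
      then show ?thesis using pc pH using \<open>H \<subseteq> open_cell c \<union> - tile c\<close> by blast
    qed
    ultimately have "H = open_cell c" by blast
    then have "{d. open_cell d \<subseteq> H} = {c}" using open_cell_sub_iff by blast
    then show ?thesis unfolding hole_area_def by simp
  next
    case False
    have "c \<in> ring M" using False square_split c(1) by blast
    then have cor: "c \<in> corners M" using cC D unfolding D1_def by blast
    define d where "d = ((if fst c = 0 then -1 else 1, if snd c = 0 then -1 else 1) :: real \<times> real)"
    define L where "L = (\<lambda>t. p + t *\<^sub>R d) ` {0..2}"
    have "connected L" unfolding L_def
      by (intro connected_continuous_image connected_Icc continuous_intros)
    moreover have "L \<subseteq> - R" unfolding L_def d_def R_def
      using corner_ray[OF M3 Csq cor cC c(2)] p(1) unfolding R_def by auto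
    moreover have "p \<in> L" unfolding L_def by (rule image_eqI[of _ _ 0]) auto
    ultimately have "L \<subseteq> H" unfolding p(2) using connected_component_maximal by metis
    moreover have q: "p + 2 *\<^sub>R d \<in> L" unfolding L_def by auto
    ultimately have "p + 2 *\<^sub>R d \<in> Q" using ext by blast
    moreover have "p + 2 *\<^sub>R d \<notin> Q"
    proof -
      obtain x y where pxy: "p = (x,y)" by (cases p)
      have cc: "fst c = 0 \<or> fst c = M - 1" using cor unfolding corners_def by auto
      have rM: "real (M - 1) = real M - 1" using M3 by simp
      have pt: "real (fst c) \<le> x" "x \<le> real (fst c) + 1"
        using c(2) unfolding pxy by (auto simp: mem_tile)
      show ?thesis
      proof (cases "fst c = 0")
        case True
        then show ?thesis using pt unfolding pxy d_def Q_def mem_cbox2 by simp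
      next
        case False
        then show ?thesis using pt cc rM M3 unfolding pxy d_def Q_def mem_cbox2 by simp
      qed
    qed
    ultimately show ?thesis by blast
  qed
qed

definition dbl :: "space \<Rightarrow> space" where "dbl c = (2 * fst c, 2 * snd c)"
definition mid :: "space \<Rightarrow> space \<Rightarrow> space" where "mid u v = (fst u + fst v, snd u + snd v)"
definition half :: "space \<Rightarrow> space" where "half c = (fst c div 2, snd c div 2)"
definition Abig :: "nat \<Rightarrow> space set \<Rightarrow> space set" where
  "Abig M C = {x \<in> square (2*M - 1). odd (fst x + snd x)} \<union> dbl ` C"

lemma adj_sym: "adj u v \<Longrightarrow> adj v u" unfolding adj_def by auto
lemma adj_par: "adj x y \<Longrightarrow> odd (fst x + snd x + fst y + snd y)"
  unfolding adj_def by auto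
lemma dbl_even: "even (fst (dbl c) + snd (dbl c))" unfolding dbl_def by simp
lemma dbl_inj: "dbl u = dbl v \<Longrightarrow> u = v" unfolding dbl_def by (simp add: prod_eq_iff)
lemma half_dbl[simp]: "half (dbl c) = c" unfolding dbl_def half_def by simp
lemma mid_odd: "adj u v \<Longrightarrow> odd (fst (mid u v) + snd (mid u v))"
  unfolding adj_def mid_def by auto
lemma mid_sym: "mid u v = mid v u" unfolding mid_def by (simp add: add.commute)
lemma adj_dbl_mid: "adj u v \<Longrightarrow> adj (dbl u) (mid u v)"
  unfolding adj_def mid_def dbl_def by auto
lemma mid_sq: "u \<in> square M \<Longrightarrow> v \<in> square M \<Longrightarrow> adj u v \<Longrightarrow> mid u v \<in> square (2*M-1)"
  unfolding adj_def mid_def square_def by auto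

lemma two_nodes: "adj (dbl u) e \<Longrightarrow> adj (dbl w) e \<Longrightarrow> u = w \<or> (adj u w \<and> e = mid u w)"
  unfolding adj_def dbl_def mid_def prod_eq_iff by auto

lemma mid_nodes: "adj u v \<Longrightarrow> adj (dbl w) (mid u v) \<Longrightarrow> w = u \<or> w = v"
  unfolding adj_def dbl_def mid_def prod_eq_iff by auto

lemma mid_eq: "adj u v \<Longrightarrow> adj u' v' \<Longrightarrow> mid u v = mid u' v' \<Longrightarrow> (u = u' \<and> v = v') \<or> (u = v' \<and> v = u')"
  unfolding adj_def mid_def prod_eq_iff by auto

lemma edge_nodes:
  assumes "e \<in> square (2*M - 1)" "odd (fst e + snd e)"
  shows "\<exists>u v. u \<in> square M \<and> v \<in> square M \<and> adj u v \<and> adj (dbl u) e \<and> adj (dbl v) e"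
proof -
  obtain i j where e: "e = (i,j)" by (cases e)
  show ?thesis
  proof (cases "odd i")
    case True
    then have j: "even j" using assms unfolding e by simp
    show ?thesis using assms True j unfolding e
      by (intro exI[of _ "((i - 1) div 2, j div 2)"] exI[of _ "((i + 1) div 2, j div 2)"])
         (auto simp: square_def adj_def dbl_def elim!: oddE evenE)
  next
    case False
    then have j: "odd j" using assms unfolding e by simp
    show ?thesis using assms False j unfolding e
      by (intro exI[of _ "(i div 2, (j - 1) div 2)"] exI[of _ "(i div 2, (j + 1) div 2)"])
         (auto simp: square_def adj_def dbl_def elim!: oddE evenE)
  qed
qed

lemma Abig_even:
  assumes "x \<in> Abig M C" "even (fst x + snd x)" shows "\<exists>c\<in>C. x = dbl c"
  using assms unfolding Abig_def by auto

lemma dbl_in: "c \<in> C \<Longrightarrow> dbl c \<in> Abig M C" unfolding Abig_def by blast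
lemma mid_in: "u \<in> square M \<Longrightarrow> v \<in> square M \<Longrightarrow> adj u v \<Longrightarrow> mid u v \<in> Abig M C"
  unfolding Abig_def using mid_sq mid_odd by blast

lemma conn_fwd:
  assumes dc: "dual_connected (Abig M C)"
  shows "dual_connected C"
  unfolding dual_connected_def
proof (intro ballI)
  fix u v assume u: "u \<in> C" and v: "v \<in> C"
  define P where "P x \<longleftrightarrow> (\<forall>w\<in>C. (dbl w = x \<or> adj (dbl w) x) \<longrightarrow> (u,w) \<in> (dual_edges C)\<^sup>*)" for x
  have "(dbl u, dbl v) \<in> (dual_edges (Abig M C))\<^sup>*" using dc u v dbl_in unfolding dual_connected_def by blast
  then have "P (dbl v)"
  proof (induction rule: rtrancl_induct)
    case base
    show ?case unfolding P_def
    proof (intro ballI impI)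
      fix w assume "w \<in> C" "dbl w = dbl u \<or> adj (dbl w) (dbl u)"
      moreover have "\<not> adj (dbl w) (dbl u)"
      proof
        assume "adj (dbl w) (dbl u)"
        from adj_par[OF this] dbl_even[of w] dbl_even[of u] show False by presburger
      qed
      ultimately have "w = u" using dbl_inj by blast
      then show "(u,w) \<in> (dual_edges C)\<^sup>*" by simp
    qed
  next
    case (step x y)
    have xy: "x \<in> Abig M C" "y \<in> Abig M C" "adj x y" using step(2) unfolding dual_edges_def by auto
    show ?case unfolding P_def
    proof (intro ballI impI)
      fix w assume w: "w \<in> C" "dbl w = y \<or> adj (dbl w) y"
      show "(u,w) \<in> (dual_edges C)\<^sup>*"
      proof (cases "dbl w = y")
        case True
        then have "adj (dbl w) x" using xy(3) adj_sym by simp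
        then show ?thesis using step(3) w(1) unfolding P_def by blast
      next
        case False
        then have a: "adj (dbl w) y" using w by simp
        have "even (fst x + snd x)" using adj_par[OF a] adj_par[OF xy(3)] dbl_even[of w] by presburger
        then obtain w' where w': "w' \<in> C" "x = dbl w'" using Abig_even[OF xy(1)] by blast
        have uw': "(u,w') \<in> (dual_edges C)\<^sup>*" using step(3) w' unfolding P_def by blast
        have "w' = w \<or> adj w' w" using two_nodes[of w' y w] xy(3) a w' by blast
        then show ?thesis
        proof
          assume "w' = w" then show ?thesis using uw' by simp
        next
          assume "adj w' w"
          then have "(w',w) \<in> dual_edges C" using w w' unfolding dual_edges_def by blast
          then show ?thesis using uw' by simp
        qed
      qed
    qed
  qed
  then show "(u,v) \<in> (dual_edges C)\<^sup>*" using v unfolding P_def by blast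
qed

lemma conn_indep:
  assumes dc: "dual_connected (Abig M C)" and ne: "C \<noteq> {}"
  shows "indep M C"
  unfolding indep_def
proof (intro allI impI, rule ccontr)
  fix u v assume u: "u \<in> square M" and v: "v \<in> square M" and a: "adj u v" and n: "\<not> (u \<in> C \<or> v \<in> C)"
  obtain c where c: "c \<in> C" using ne by blast
  have e: "mid u v \<in> Abig M C" using mid_in[OF u v a] .
  have "(mid u v, dbl c) \<in> (dual_edges (Abig M C))\<^sup>*" using dc e dbl_in[OF c] unfolding dual_connected_def by blast
  moreover have "mid u v \<noteq> dbl c" using mid_odd[OF a] dbl_even[of c] by metis
  ultimately obtain y where y: "(mid u v, y) \<in> dual_edges (Abig M C)" by (metis converse_rtranclE)
  then have y': "y \<in> Abig M C" "adj (mid u v) y" unfolding dual_edges_def by auto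
  have "even (fst y + snd y)" using adj_par[OF y'(2)] mid_odd[OF a] by presburger
  then obtain w where w: "w \<in> C" "y = dbl w" using Abig_even[OF y'(1)] by blast
  then have "w = u \<or> w = v" using mid_nodes[OF a] adj_sym[OF y'(2)] by simp
  then show False using w n by blast
qed

lemma conn_bwd:
  assumes Csq: "C \<subseteq> square M" and dc: "dual_connected C" and ind: "indep M C"
  shows "dual_connected (Abig M C)"
proof -
  let ?E = "dual_edges (Abig M C)"
  have nodes: "(dbl u, dbl v) \<in> ?E\<^sup>*" if u: "u \<in> C" and v: "v \<in> C" for u v
  proof -
    have "(u,v) \<in> (dual_edges C)\<^sup>*" using dc u v unfolding dual_connected_def by blast
    then show ?thesis
    proof (induction rule: rtrancl_induct)
      case base then show ?case by simp
    next
      case (step x y)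
      have xy: "x \<in> C" "y \<in> C" "adj x y" using step(2) unfolding dual_edges_def by auto
      have sq: "x \<in> square M" "y \<in> square M" using xy Csq by auto
      have "(dbl x, mid x y) \<in> ?E" using dbl_in[OF xy(1)] mid_in[OF sq xy(3)] adj_dbl_mid[OF xy(3)]
        unfolding dual_edges_def by blast
      moreover have "(mid x y, dbl y) \<in> ?E"
        using dbl_in[OF xy(2)] mid_in[OF sq xy(3)] adj_dbl_mid[OF adj_sym[OF xy(3)]] adj_sym mid_sym
        unfolding dual_edges_def by fastforce
      ultimately show ?case using step(3) by (meson rtrancl.rtrancl_into_rtrancl)
    qed
  qed
  have near: "\<exists>c\<in>C. (x, dbl c) \<in> ?E \<and> (dbl c, x) \<in> ?E \<or> x = dbl c" if x: "x \<in> Abig M C" for x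
  proof (cases "odd (fst x + snd x)")
    case True
    then have xs: "x \<in> square (2*M-1)" using x dbl_even unfolding Abig_def by auto
    obtain u v where uv: "u \<in> square M" "v \<in> square M" "adj u v" "adj (dbl u) x" "adj (dbl v) x"
      using edge_nodes[OF xs True] by blast
    have "u \<in> C \<or> v \<in> C" using ind uv unfolding indep_def by blast
    then show ?thesis using uv x dbl_in adj_sym unfolding dual_edges_def by blast
  next
    case False then show ?thesis using Abig_even[OF x] by blast
  qed
  show ?thesis unfolding dual_connected_def
  proof (intro ballI)
    fix x y assume x: "x \<in> Abig M C" and y: "y \<in> Abig M C"
    obtain cx where cx: "cx \<in> C" "(x, dbl cx) \<in> ?E\<^sup>*" using near[OF x] by blast
    obtain cy where cy: "cy \<in> C" "(dbl cy, y) \<in> ?E\<^sup>*" using near[OF y] by blast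
    show "(x,y) \<in> ?E\<^sup>*" using cx cy nodes[OF cx(1) cy(1)] by (meson rtrancl_trans)
  qed
qed

lemma modcontra:
  fixes k1 k2 n :: nat
  assumes a1: "k1 < n" and a2: "k2 < n" and n3: "n \<ge> 3" and e1: "k1 = (k2 + 1) mod n" and e2: "k2 = (k1 + 1) mod n"
  shows False
proof (cases "k1 + 1 < n")
  case True
  have k2: "k2 = k1 + 1" using e2 True by (simp only: mod_less)
  show False
  proof (cases "k1 + 2 < n")
    case True
    have "(k2 + 1) mod n = k1 + 2" using True k2 by simp
    then show False using e1 by linarith
  next
    case False
    then have "k2 + 1 = n" using k2 a2 by linarith
    then have "(k2 + 1) mod n = 0" by simp
    then show False using e1 k2 \<open>k2 + 1 = n\<close> n3 by linarith
  qed
next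
  case False
  then have "k1 + 1 = n" using a1 by linarith
  then have "(k1 + 1) mod n = 0" by simp
  then have "k2 = 0" using e2 by linarith
  then have "(k2 + 1) mod n = 1" using n3 by simp
  then show False using e1 \<open>k1 + 1 = n\<close> n3 by linarith
qed

lemma cyc_fwd:
  assumes Csq: "C \<subseteq> square M" and hc: "has_dual_cycle C"
  shows "has_dual_cycle (Abig M C)"
proof -
  obtain xs where xs: "length xs \<ge> 3" "distinct xs" "set xs \<subseteq> C"
    "\<forall>k < length xs. adj (xs ! k) (xs ! ((k + 1) mod length xs))"
    using hc unfolding has_dual_cycle_def by blast
  define n where "n = length xs"
  have n3: "n \<ge> 3" using xs n_def by simp
  have inC: "xs ! k \<in> C" if "k < n" for k using xs(3) that n_def nth_mem by blast
  have inS: "xs ! k \<in> square M" if "k < n" for k using inC[OF that] Csq by blast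
  have ad: "adj (xs ! k) (xs ! ((k + 1) mod n))" if "k < n" for k using xs(4) that n_def by simp
  have mn: "(k + 1) mod n < n" for k using n3 by simp
  define g where "g m = (if even m then dbl (xs ! (m div 2)) else mid (xs ! (m div 2)) (xs ! ((m div 2 + 1) mod n)))" for m
  define ys where "ys = map g [0..<2*n]"
  have lys: "length ys = 2 * n" unfolding ys_def by simp
  have ysn: "ys ! m = g m" if "m < 2 * n" for m unfolding ys_def using that by simp
  have gin: "g m \<in> Abig M C" if "m < 2 * n" for m
  proof -
    have k: "m div 2 < n" using that by simp
    show ?thesis unfolding g_def using dbl_in[OF inC[OF k]] mid_in[OF inS[OF k] inS[OF mn] ad[OF k]] by simp
  qed
  have inj: "inj_on g {0..<2*n}"
  proof (rule inj_onI)
    fix m1 m2 assume m1: "m1 \<in> {0..<2*n}" and m2: "m2 \<in> {0..<2*n}" and e: "g m1 = g m2"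
    have k1: "m1 div 2 < n" and k2: "m2 div 2 < n" using m1 m2 by auto
    have par: "even m1 = even m2"
    proof (rule ccontr)
      assume "even m1 \<noteq> even m2"
      then consider "even m1" "odd m2" | "odd m1" "even m2" by auto
      then show False
      proof cases
        case 1
        then have "dbl (xs ! (m1 div 2)) = mid (xs ! (m2 div 2)) (xs ! ((m2 div 2 + 1) mod n))" using e unfolding g_def by simp
        then show False using dbl_even mid_odd[OF ad[OF k2]] by metis
      next
        case 2
        then have "dbl (xs ! (m2 div 2)) = mid (xs ! (m1 div 2)) (xs ! ((m1 div 2 + 1) mod n))" using e unfolding g_def by simp
        then show False using dbl_even mid_odd[OF ad[OF k1]] by metis
      qed
    qed
    have nth_inj: "a = b" if "a < n" "b < n" "xs ! a = xs ! b" for a b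
      using that xs(2) n_def nth_eq_iff_index_eq by blast
    show "m1 = m2"
    proof (cases "even m1")
      case True
      then have "dbl (xs ! (m1 div 2)) = dbl (xs ! (m2 div 2))" using e par unfolding g_def by simp
      then have "m1 div 2 = m2 div 2" using dbl_inj nth_inj k1 k2 by blast
      then show ?thesis using True par by presburger
    next
      case False
      then have "mid (xs ! (m1 div 2)) (xs ! ((m1 div 2 + 1) mod n)) = mid (xs ! (m2 div 2)) (xs ! ((m2 div 2 + 1) mod n))"
        using e par unfolding g_def by simp
      from mid_eq[OF ad[OF k1] ad[OF k2] this]
      have "m1 div 2 = m2 div 2"
      proof
        assume "xs ! (m1 div 2) = xs ! (m2 div 2) \<and> xs ! ((m1 div 2 + 1) mod n) = xs ! ((m2 div 2 + 1) mod n)"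
        then show ?thesis using nth_inj k1 k2 by blast
      next
        assume h: "xs ! (m1 div 2) = xs ! ((m2 div 2 + 1) mod n) \<and> xs ! ((m1 div 2 + 1) mod n) = xs ! (m2 div 2)"
        have "m1 div 2 = (m2 div 2 + 1) mod n" using h nth_inj k1 mn by blast
        moreover have "m2 div 2 = (m1 div 2 + 1) mod n" using h nth_inj k2 mn by metis
        ultimately show ?thesis using modcontra[OF k1 k2 n3] by blast
      qed
      then show ?thesis using False par by presburger
    qed
  qed
  have dys: "distinct ys" unfolding ys_def distinct_map using inj by simp
  have sys: "set ys \<subseteq> Abig M C" unfolding ys_def using gin by auto
  have adys: "\<forall>m < length ys. adj (ys ! m) (ys ! ((m + 1) mod length ys))"
  proof (intro allI impI)
    fix m assume "m < length ys"
    then have m: "m < 2 * n" using lys by simp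
    have k: "m div 2 < n" using m by simp
    show "adj (ys ! m) (ys ! ((m + 1) mod length ys))"
    proof (cases "even m")
      case True
      then have m1: "m + 1 < 2 * n" using m by presburger
      then have "(m + 1) mod length ys = m + 1" using lys by simp
      moreover have "(m + 1) div 2 = m div 2" "odd (m+1)" using True by auto
      ultimately show ?thesis using ysn[OF m] ysn[OF m1] True adj_dbl_mid[OF ad[OF k]] unfolding g_def by simp
    next
      case False
      then obtain k' where mk: "m = 2 * k' + 1" by (auto elim: oddE)
      have kk: "m div 2 = k'" using mk by simp
      have "(m + 1) mod (2 * n) = 2 * ((k' + 1) mod n)" unfolding mk by (simp add: mult_mod_right)
      then have idx: "(m + 1) mod length ys = 2 * ((k' + 1) mod n)" using lys by simp
      have lt: "2 * ((k' + 1) mod n) < 2 * n" using mn by simp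
      have "ys ! ((m + 1) mod length ys) = dbl (xs ! ((k' + 1) mod n))"
        unfolding idx ysn[OF lt] g_def by simp
      moreover have "ys ! m = mid (xs ! k') (xs ! ((k' + 1) mod n))" unfolding ysn[OF m] g_def using False kk by simp
      moreover have "adj (mid (xs ! k') (xs ! ((k' + 1) mod n))) (dbl (xs ! ((k' + 1) mod n)))"
        using adj_dbl_mid[OF adj_sym[OF ad[OF k[unfolded kk]]]] mid_sym adj_sym by metis
      ultimately show ?thesis by simp
    qed
  qed
  show ?thesis unfolding has_dual_cycle_def using lys n3 dys sys adys
    by (intro exI[of _ ys]) simp
qed

lemma idx_lemma:
  fixes k n s :: nat
  assumes "k < n" "s \<le> 1" "n \<ge> 1"
  shows "((2*k + s + 1) mod (2*n) + 1) mod (2*n) = 2 * ((k + 1) mod n) + s"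
proof (cases "k + 1 < n")
  case True
  then have a: "(2*k + s + 1) mod (2*n) = 2*k+s+1" using assms by simp
  have b: "(2*k+s+1+1) mod (2*n) = 2*k+s+2" using True assms by simp
  show ?thesis unfolding a using b True by simp
next
  case False
  then have kn: "k + 1 = n" using assms by simp
  show ?thesis
  proof (cases "s = 0")
    case True
    have a: "(2*k + s + 1) mod (2*n) = 2*k+1" using True kn by simp
    have b: "2*k+1+1 = 2*n" using kn by simp
    have c: "(k+1) mod n = 0" using kn by simp
    show ?thesis unfolding a b c using True by simp
  next
    case False
    then have "s = 1" using assms by simp
    moreover have "(2 * k + 1 + 1) mod (2 * n) = 0"
    proof -
      have "2 * k + 1 + 1 = 2 * n" using kn by simp
      then show ?thesis by (simp only: mod_self)
    qed
    ultimately show ?thesis using kn assms by simp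
  qed
qed

lemma cyc_bwd:
  assumes hc: "has_dual_cycle (Abig M C)"
  shows "has_dual_cycle C"
proof -
  obtain ys where ys: "length ys \<ge> 3" "distinct ys" "set ys \<subseteq> Abig M C"
    "\<forall>k < length ys. adj (ys ! k) (ys ! ((k + 1) mod length ys))"
    using hc unfolding has_dual_cycle_def by blast
  define L where "L = length ys"
  have L3: "L \<ge> 3" using ys L_def by simp
  define q where "q m \<longleftrightarrow> even (fst (ys ! m) + snd (ys ! m))" for m
  have ad: "adj (ys ! m) (ys ! ((m + 1) mod L))" if "m < L" for m using ys(4) that L_def by simp
  have par: "q m = (q 0 = even m)" if "m < L" for m
    using that
  proof (induction m)
    case 0 then show ?case by simp
  next
    case (Suc m)
    have "(m + 1) mod L = Suc m" using Suc.prems by simp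
    then have "adj (ys ! m) (ys ! Suc m)" using ad[of m] Suc.prems by simp
    from adj_par[OF this] have "q (Suc m) = (\<not> q m)" unfolding q_def by presburger
    then show ?case using Suc by simp
  qed
  have "adj (ys ! (L - 1)) (ys ! 0)" using ad[of "L - 1"] L3 by simp
  from adj_par[OF this] have "q 0 = (\<not> q (L - 1))" unfolding q_def by presburger
  then have "even L" using par[of "L - 1"] L3 by (cases "even L") auto
  then obtain n where Ln: "L = 2 * n" by (auto elim: evenE)
  have n2: "n \<ge> 2" using L3 Ln by simp
  define s where "s = (if q 0 then 0 else 1::nat)"
  have s1: "s \<le> 1" unfolding s_def by simp
  have pos: "2 * k + s < L" if "k < n" for k using that Ln s1 by simp
  have qnode: "q (2 * k + s)" if "k < n" for k using par[OF pos[OF that]] unfolding s_def by auto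
  have inA: "ys ! m \<in> Abig M C" if "m < L" for m using ys(3) that L_def nth_mem by blast
  define z where "z k = half (ys ! (2 * k + s))" for k
  have zk: "z k \<in> C \<and> ys ! (2 * k + s) = dbl (z k)" if kn: "k < n" for k
  proof -
    obtain c where "c \<in> C" "ys ! (2 * k + s) = dbl c"
      using Abig_even[OF inA[OF pos[OF kn]]] qnode[OF kn] unfolding q_def by blast
    then show ?thesis unfolding z_def by simp
  qed
  have ysinj: "a = b" if "a < L" "b < L" "ys ! a = ys ! b" for a b
    using that ys(2) L_def nth_eq_iff_index_eq by blast
  have zinj: "a = b" if "a < n" "b < n" "z a = z b" for a b
  proof -
    have "ys ! (2 * a + s) = ys ! (2 * b + s)" using zk[OF that(1)] zk[OF that(2)] that(3) by simp
    then have "2 * a + s = 2 * b + s" using ysinj pos that by blast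
    then show ?thesis by simp
  qed
  have mn: "(k + 1) mod n < n" for k using n2 by simp
  have eadj: "adj (dbl (z k)) (ys ! ((2*k+s+1) mod L)) \<and> adj (ys ! ((2*k+s+1) mod L)) (dbl (z ((k + 1) mod n)))"
    if "k < n" for k
  proof -
    have i: "((2*k + s + 1) mod L + 1) mod L = 2 * ((k + 1) mod n) + s"
      unfolding Ln using idx_lemma[OF that s1] n2 by simp
    have m1: "(2*k + s + 1) mod L < L" using L3 by simp
    show ?thesis using ad[OF pos[OF that]] ad[OF m1] zk[OF that] zk[OF mn[of k]] unfolding i by simp
  qed
  have zadj: "adj (z k) (z ((k + 1) mod n)) \<and> ys ! ((2*k+s+1) mod L) = mid (z k) (z ((k + 1) mod n))"
    if "k < n" for k
  proof -
    have "z k \<noteq> z ((k + 1) mod n)"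
    proof
      assume "z k = z ((k + 1) mod n)"
      then have "k = (k + 1) mod n" using zinj that mn by blast
      show False
      proof (cases "k + 1 < n")
        case True
        then have "(k + 1) mod n = k + 1" by simp
        then show False using \<open>k = (k + 1) mod n\<close> by linarith
      next
        case False
        then have "k + 1 = n" using that by linarith
        then have "(k + 1) mod n = 0" by simp
        then show False using \<open>k = (k + 1) mod n\<close> \<open>k + 1 = n\<close> n2 by linarith
      qed
    qed
    then show ?thesis using two_nodes[of "z k" "ys ! ((2*k+s+1) mod L)" "z ((k + 1) mod n)"]
        eadj[OF that] adj_sym by blast
  qed
  define zs where "zs = map z [0..<n]"
  have n3: "n \<ge> 3"
  proof (rule ccontr)
    assume "\<not> n \<ge> 3"
    then have n: "n = 2" using n2 by simp
    have e0: "ys ! ((s+1) mod L) = mid (z 0) (z 1)" using zadj[of 0] n by simp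
    have "1 < n" using n by simp
    then have z1: "ys ! ((2*1+s+1) mod L) = mid (z 1) (z ((1 + 1) mod n))" using zadj by blast
    have e1: "ys ! ((s+3) mod L) = mid (z 1) (z 0)"
    proof -
      have a: "(1+1) mod n = (0::nat)" using n by simp
      have b: "2*1+s+1 = s+3" by simp
      show ?thesis using z1 unfolding a b .
    qed
    have "ys ! ((s+1) mod L) = ys ! ((s+3) mod L)" using e0 e1 mid_sym[of "z 0" "z 1"] by simp
    moreover have "(s+1) mod L < L" "(s+3) mod L < L" using L3 by simp_all
    ultimately have "(s+1) mod L = (s+3) mod L" using ysinj by blast
    moreover have "s = 0 \<or> s = 1" using s1 by auto
    ultimately show False using Ln n by auto
  qed
  show ?thesis unfolding has_dual_cycle_def
  proof (intro exI[of _ zs] conjI)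
    show "3 \<le> length zs" unfolding zs_def using n3 by simp
    show "distinct zs" unfolding zs_def distinct_map using zinj by (auto intro: inj_onI)
    show "set zs \<subseteq> C" unfolding zs_def using zk by auto
    show "\<forall>k<length zs. adj (zs ! k) (zs ! ((k + 1) mod length zs))"
      unfolding zs_def using zadj mn by simp
  qed
qed

lemma D1_dbl:
  assumes "N = 2*M - 1" "M \<ge> 3" "(a,b) \<in> D1 M"
  shows "(2*a, 2*b) \<in> D1 N"
  using assms unfolding D1_def ring_def corners_def square_def by auto

lemma setup_facts:
  assumes oN: "odd N" and N5: "N \<ge> 5" and cA: "compressible N A"
  defines "M \<equiv> (N + 1) div 2"
  shows "N = 2*M - 1" "M \<ge> 3" "compression N A \<subseteq> square M" "D1 M \<subseteq> compression N A"
    "A = Abig M (compression N A)"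
proof -
  show NM: "N = 2*M - 1" unfolding M_def using oN by (auto elim: oddE)
  show M3: "M \<ge> 3" unfolding M_def using N5 by simp
  have Asq: "A \<subseteq> square N" and D1A: "D1 N \<subseteq> A"
    and Bf: "\<And>i j. (i,j) \<in> interior_sq N \<Longrightarrow> odd (i + j) \<Longrightarrow> (i,j) \<in> A"
    and Oe: "\<And>i j. (i,j) \<in> interior_sq N \<Longrightarrow> odd i \<Longrightarrow> odd j \<Longrightarrow> (i,j) \<notin> A"
    using cA unfolding compressible_def is_arrangement_def by auto
  have cm: "compression N A = {c \<in> square M. dbl c \<in> A}"
  proof (intro set_eqI iffI)
    fix c assume "c \<in> compression N A"
    then obtain a b where ab: "c = (a,b)" and
      h: "(a,b) \<in> D1 M \<or> ((a,b) \<in> corners M \<and> (2*a,2*b) \<in> A) \<or> ((a,b) \<in> interior_sq M \<and> (2*a,2*b) \<in> A)"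
      unfolding compression_def M_def[symmetric] Let_def by (cases c) auto
    have "D1 M \<subseteq> square M" "corners M \<subseteq> square M" "interior_sq M \<subseteq> square M"
      using M3 unfolding D1_def ring_def corners_def interior_sq_def square_def by auto
    moreover have "(a,b) \<in> D1 M \<Longrightarrow> (2*a,2*b) \<in> A" using D1_dbl[OF NM M3] D1A by blast
    ultimately show "c \<in> {c \<in> square M. dbl c \<in> A}" using h unfolding ab dbl_def by auto
  next
    fix c assume c: "c \<in> {c \<in> square M. dbl c \<in> A}"
    obtain a b where ab: "c = (a,b)" by (cases c)
    have "(a,b) \<in> D1 M \<or> (a,b) \<in> corners M \<or> (a,b) \<in> interior_sq M"
      using c square_split[of "(a,b)" M] unfolding ab D1_def by blast
    then show "c \<in> compression N A" using c unfolding ab compression_def M_def[symmetric] Let_def dbl_def by auto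
  qed
  show Csq: "compression N A \<subseteq> square M" unfolding cm by blast
  show "D1 M \<subseteq> compression N A"
  proof
    fix c assume c: "c \<in> D1 M"
    then have "c \<in> square M" unfolding D1_def ring_def by auto
    moreover have "dbl c \<in> A" using D1_dbl[OF NM M3, of "fst c" "snd c"] c D1A unfolding dbl_def by auto
    ultimately show "c \<in> compression N A" unfolding cm by blast
  qed
  show "A = Abig M (compression N A)"
  proof (intro set_eqI iffI)
    fix x assume x: "x \<in> A"
    obtain i j where ij: "x = (i,j)" by (cases x)
    have xs: "x \<in> square N" using x Asq by blast
    show "x \<in> Abig M (compression N A)"
    proof (cases "odd (i + j)")
      case True
      then show ?thesis using xs NM unfolding Abig_def ij by auto
    next
      case False
      have "\<not> (odd i \<and> odd j)"
      proof
        assume oo: "odd i \<and> odd j"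
        then have "(i,j) \<in> interior_sq N" using xs oN unfolding ij square_def interior_sq_def
          by (auto elim!: oddE)
        then show False using Oe oo x ij by blast
      qed
      then have ev: "even i" "even j" using False by auto
      have "x = dbl (i div 2, j div 2)" using ev unfolding ij dbl_def by simp
      moreover have "(i div 2, j div 2) \<in> square M" using xs NM ev unfolding ij square_def by (auto elim!: evenE)
      ultimately show ?thesis unfolding Abig_def cm using x by auto
    qed
  next
    fix x assume x: "x \<in> Abig M (compression N A)"
    obtain i j where ij: "x = (i,j)" by (cases x)
    show "x \<in> A"
    proof (cases "x \<in> dbl ` compression N A")
      case True then show ?thesis unfolding cm by auto
    next
      case False
      then have xs: "(i,j) \<in> square N" "odd (i + j)" using x NM unfolding Abig_def ij by auto
      show ?thesis
      proof (cases "(i,j) \<in> interior_sq N")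
        case True then show ?thesis using Bf xs ij by blast
      next
        case False
        then have "(i,j) \<in> ring N" using xs square_split by blast
        moreover have "(i,j) \<notin> corners N" using xs oN unfolding corners_def by (auto intro: odd_pos)
        ultimately show ?thesis using D1A ij unfolding D1_def by blast
      qed
    qed
  qed
qed

theorem lemma8:
  fixes N :: nat and A :: "(nat \<times> nat) set"
  assumes "odd N" and "N \<ge> 5" and "compressible N A"
  shows "acyclic_polyomino A \<longleftrightarrow>
         (acyclic_polyomino (compression N A) \<and>
          (\<forall>H \<in> holes (compression N A). hole_area H = 1))"
proof -
  define M where "M = (N + 1) div 2"
  define C where "C = compression N A"
  have NM: "N = 2*M - 1" and M3: "M \<ge> 3" and Csq: "C \<subseteq> square M" and D: "D1 M \<subseteq> C"
    and AC: "A = Abig M C"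
    using setup_facts[OF assms] unfolding M_def C_def by auto
  have fsq: "finite (square K)" for K
  proof -
    have "square K \<subseteq> {..<K} \<times> {..<K}" unfolding square_def by auto
    then show ?thesis using finite_subset by blast
  qed
  have D1ne: "(0,1) \<in> D1 M" using M3 unfolding D1_def ring_def corners_def square_def by auto
  have finC: "finite C" using Csq fsq finite_subset by blast
  have neC: "C \<noteq> {}" using D1ne D by blast
  have finA: "finite A" unfolding AC Abig_def using fsq[of "2*M-1"] finC by simp
  have neA: "A \<noteq> {}" unfolding AC Abig_def using neC by blast
  have "acyclic_polyomino A \<longleftrightarrow> dual_connected A \<and> \<not> has_dual_cycle A"
    unfolding acyclic_polyomino_def acyclic_arr_def using dual_conn_poly[OF finA neA] by blast
  also have "\<dots> \<longleftrightarrow> dual_connected C \<and> indep M C \<and> \<not> has_dual_cycle C"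
    unfolding AC using conn_fwd conn_indep[OF _ neC] conn_bwd[OF Csq] cyc_fwd[OF Csq] cyc_bwd by blast
  also have "\<dots> \<longleftrightarrow> acyclic_polyomino C \<and> (\<forall>H \<in> holes C. hole_area H = 1)"
    unfolding acyclic_polyomino_def acyclic_arr_def
    using dual_conn_poly[OF finC neC] holes_ok[OF M3 Csq D] holes_bad[OF M3 Csq D] by blast
  finally show ?thesis unfolding C_def .
qed

end
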